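(* Let $p$ be an odd prime, let $k,m$ be positive integers with $\frac p2<k<p$. Then $$\binom{2mp+2k}{mp+k}\equiv(2m+1)\binom{2m}{m}\binom{2k}{k}\pmod{p^2}.$$ *)

theory Defs
  imports "HOL-Number_Theory.Number_Theory"
begin

end

theory Submission
  imports Defs
begin

fun PP :: "nat \<Rightarrow> nat \<Rightarrow> nat" where
  "PP p 0 = 1"
| "PP p (Suc N) = PP p N * (if p dvd Suc N then 1 else Suc N)"

lemma PP_coprime:
  assumes "prime p" shows "coprime (PP p N) p"
proof (induction N)
  case 0 then show ?case by simp
next
  case (Suc N)
  have "coprime (if p dvd Suc N then 1 else Suc N) p"
    using assms by (auto simp: prime_imp_coprime coprime_commute)
  then show ?case using Suc by simp
qed

lemma PP_shift:
  assumes "p > 0"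
  shows "[PP p (N + p) = fact (p - 1) * PP p N] (mod p)"
proof (induction N)
  case 0
  have "PP p n = fact n" if "n < p" for n
    using that by (induction n) (auto dest: dvd_imp_le simp: algebra_simps)
  then have a: "PP p (p - 1) = fact (p - 1)" using assms by simp
  have "PP p p = PP p (Suc (p - 1))" using assms by simp
  also have "\<dots> = fact (p - 1)" using a assms by (simp only: PP.simps(2)) simp
  finally show ?case by simp
next
  case (Suc N)
  have e: "(if p dvd Suc (N + p) then 1 else Suc (N + p)) mod p = (if p dvd Suc N then 1 else Suc N) mod p"
  proof -
    have m: "Suc (N + p) mod p = Suc N mod p"
      by (metis add_Suc mod_add_self2)
    then have "p dvd Suc (N + p) \<longleftrightarrow> p dvd Suc N" by (simp add: dvd_eq_mod_eq_0)
    then show ?thesis using m by auto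
  qed
  have "PP p (Suc N + p) = PP p (N + p) * (if p dvd Suc (N + p) then 1 else Suc (N + p))" by simp
  moreover have "[PP p (N + p) * (if p dvd Suc (N + p) then 1 else Suc (N + p))
      = (fact (p - 1) * PP p N) * (if p dvd Suc N then 1 else Suc N)] (mod p)"
    using Suc e by (intro cong_mult) (auto simp: cong_def)
  ultimately show ?case by (simp add: ac_simps)
qed

lemma PP_shift_mult:
  assumes "p > 0"
  shows "[PP p (N + a * p) = fact (p - 1) ^ a * PP p N] (mod p)"
proof (induction a)
  case 0 then show ?case by simp
next
  case (Suc a)
  have "[PP p (N + a * p + p) = fact (p - 1) * PP p (N + a*p)] (mod p)"
    using PP_shift[OF assms] by blast
  moreover have "[fact (p - 1) * PP p (N + a*p) = fact (p - 1) * (fact (p - 1) ^ a * PP p N)] (mod p)"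
    using Suc by (intro cong_mult) auto
  ultimately show ?case by (simp add: ac_simps cong_trans)
qed

lemma PP_fact:
  assumes "p > 0"
  shows "fact N = p ^ (N div p) * fact (N div p) * PP p N"
proof (induction N)
  case 0 then show ?case by simp
next
  case (Suc N)
  show ?case
  proof (cases "p dvd Suc N")
    case True
    obtain q where q: "Suc N = p * q" using True by blast
    have q0: "q > 0" using q by (cases q) auto
    have N: "N = (p - 1) + (q - 1) * p" using q q0 assms
      by (cases q; cases p) (auto simp: algebra_simps)
    have "N div p = ((p - 1) + (q - 1) * p) div p" using N by simp
    also have "\<dots> = (q - 1) + (p - 1) div p" using div_mult_self1[of p "p - 1" "q - 1"] assms by simp
    also have "\<dots> = (p - 1) div p + (q - 1)" by simp
    finally have ee: "N div p = (p - 1) div p + (q - 1)" .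
    have z: "(p - 1) div p = 0" using assms by simp
    have "N div p = q - 1" using ee z by simp
    then have d: "Suc N div p = Suc (N div p)" using q q0 assms by simp
    have s: "Suc N = p * Suc (N div p)" using True d by (metis dvd_mult_div_cancel)
    have "fact (Suc N) = Suc N * fact N" by simp
    also have "\<dots> = p * Suc (N div p) * (p ^ (N div p) * fact (N div p) * PP p N)" using Suc s by simp
    also have "\<dots> = p ^ (Suc N div p) * fact (Suc N div p) * PP p (Suc N)"
      using True d by (simp add: algebra_simps)
    finally show ?thesis .
  next
    case False
    have d: "Suc N div p = N div p"
      using False assms by (simp add: div_Suc dvd_eq_mod_eq_0) 
    show ?thesis using Suc False d by (simp add: algebra_simps)
  qed
qed



theorem lemma2p6:
  fixes p k m :: nat
  assumes "prime p" and "odd p"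
    and "m > 0" and "k > 0"
    and "real p / 2 < real k" and "k < p"
  shows "[int ((2*m*p + 2*k) choose (m*p + k))
          = int (2*m + 1) * int ((2*m) choose m) * int ((2*k) choose k)] (mod (int p ^ 2))"
proof -
  define n where "n = m*p + k"
  define N where "N = 2*m*p + 2*k"
  have p0: "p > 0" using assms(1) prime_gt_0_nat by blast
  have p2k: "p < 2*k" using assms(5) by linarith
  have Nn: "N = n + n" unfolding N_def n_def by simp
  have dN: "N div p = 2*m + 1"
  proof -
    have "N = (2*k - p) + (2*m+1)*p" unfolding N_def using p2k by (simp add: algebra_simps)
    moreover have "(2*k - p) div p = 0" using assms(6) by simp
    ultimately show ?thesis using p0 by (metis add.commute add_0 div_mult_self1 less_not_refl2)
  qed
  have dn: "n div p = m" unfolding n_def using assms(6) p0 by simp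
  have d2k: "(2*k) div p = 1"
  proof -
    have "2*k = (2*k - p) + 1*p" using p2k by simp
    moreover have "(2*k - p) div p = 0" using assms(6) by simp
    ultimately show ?thesis using p0 by (metis add.commute add_0 div_mult_self1 less_not_refl2)
  qed
  have dk: "k div p = 0" using assms(6) by simp
  define X where "X = (2*m+1) * ((2*m) choose m)"
  have fN: "fact N = p^(2*m+1) * fact (2*m+1) * PP p N" using PP_fact[OF p0, of N] dN by simp
  have fn: "fact n = p^m * fact m * PP p n" using PP_fact[OF p0, of n] dn by simp
  have f2m1: "(fact (2*m+1) :: nat) = X * (fact m * fact m)"
  proof -
    have "(fact (2*m) :: nat) = fact m * fact (2*m - m) * ((2*m) choose m)"
      by (rule binomial_fact_lemma[symmetric]) simp
    then show ?thesis unfolding X_def by (simp add: algebra_simps)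
  qed
  have bN: "(fact N :: nat) = fact n * fact n * (N choose n)"
    using binomial_fact_lemma[of n N] Nn by simp
  have "(p^(2*m) * (fact m * fact m)) * ((N choose n) * (PP p n)^2)
      = (p^(2*m) * (fact m * fact m)) * (p * X * PP p N)"
  proof -
    have "(p^(2*m) * (fact m * fact m)) * ((N choose n) * (PP p n)^2) = fact n * fact n * (N choose n)"
    proof -
      have pp: "p^(2*m) = p^m * p^m" by (simp add: mult_2 power_add)
      show ?thesis unfolding fn pp by (simp add: algebra_simps power2_eq_square)
    qed
    also have "\<dots> = fact N" using bN by simp
    also have "\<dots> = (p^(2*m) * (fact m * fact m)) * (p * X * PP p N)"
      unfolding fN f2m1 by (simp add: algebra_simps)
    finally show ?thesis .
  qed
  then have E1: "(N choose n) * (PP p n)^2 = p * X * PP p N"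
    using p0 by (subst (asm) mult_left_cancel) auto
  have E2: "((2*k) choose k) * (PP p k)^2 = p * PP p (2*k)"
  proof -
    have f2k: "fact (2*k) = p * PP p (2*k)" using PP_fact[OF p0, of "2*k"] d2k by simp
    have fk: "fact k = PP p k" using PP_fact[OF p0, of k] dk by simp
    have "(fact (2*k)::nat) = fact k * fact (2*k - k) * ((2*k) choose k)"
      by (rule binomial_fact_lemma[symmetric]) simp
    then show ?thesis using f2k fk by (simp add: power2_eq_square mult_2 algebra_simps)
  qed
  define W where "W = (fact (p - 1) :: nat)"
  have c1: "[PP p N = W^(2*m) * PP p (2*k)] (mod p)"
    using PP_shift_mult[OF p0, of "2*k" "2*m"] unfolding N_def W_def by (simp add: algebra_simps)
  have c2: "[PP p n = W^m * PP p k] (mod p)"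
    using PP_shift_mult[OF p0, of k m] unfolding n_def W_def by (simp add: algebra_simps)
  have c3: "[(PP p n)^2 = W^(2*m) * (PP p k)^2] (mod p)"
  proof -
    have w: "W^(2*m) = (W^m)^2" by (simp only: power_mult mult.commute[of 2 m])
    have eq: "(W^m * PP p k)^2 = W^(2*m) * (PP p k)^2" unfolding w by (rule power_mult_distrib)
    have "[(PP p n)^2 = (W^m * PP p k)^2] (mod p)" by (rule cong_pow[OF c2])
    then show ?thesis unfolding eq .
  qed
  have C: "[PP p N * (PP p k)^2 = PP p (2*k) * (PP p n)^2] (mod p)"
  proof -
    have "[PP p N * (PP p k)^2 = W^(2*m) * PP p (2*k) * (PP p k)^2] (mod p)"
      using cong_mult[OF c1 cong_refl] by blast
    moreover have "[PP p (2*k) * (PP p n)^2 = PP p (2*k) * (W^(2*m) * (PP p k)^2)] (mod p)"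
      using cong_mult[OF cong_refl c3] by blast
    ultimately show ?thesis by (metis cong_sym cong_trans mult.assoc mult.commute)
  qed
  then have Ci: "int p dvd (int (PP p N * (PP p k)^2) - int (PP p (2*k) * (PP p n)^2))"
    by (metis cong_int_iff cong_iff_dvd_diff)
  define Q where "Q = (PP p n)^2 * (PP p k)^2"
  have cop: "coprime (int Q) (int p ^ 2)"
  proof -
    have "coprime Q p" unfolding Q_def using PP_coprime[OF assms(1)] by simp
    then have "coprime Q (p^2)" by simp
    then show ?thesis by (metis coprime_int_iff of_nat_power)
  qed
  have L: "int (N choose n) * int Q = int p * int X * (int (PP p N * (PP p k)^2))"
    using arg_cong[OF E1, of "\<lambda>x. int (x * (PP p k)^2)"] unfolding Q_def by (simp add: algebra_simps)
  have R: "int (2*m + 1) * int ((2*m) choose m) * int ((2*k) choose k) * int Q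
        = int p * int X * int (PP p (2*k) * (PP p n)^2)"
    using arg_cong[OF E2, of "\<lambda>x. int (X * x * (PP p n)^2)"] unfolding Q_def X_def
    by (simp add: algebra_simps)
  have "[int (N choose n) * int Q = int (2*m + 1) * int ((2*m) choose m) * int ((2*k) choose k) * int Q] (mod (int p ^ 2))"
  proof -
    obtain t where t: "int (PP p N * (PP p k)^2) - int (PP p (2*k) * (PP p n)^2) = int p * t"
      using Ci by blast
    have "int (N choose n) * int Q - int (2*m + 1) * int ((2*m) choose m) * int ((2*k) choose k) * int Q
        = int p ^ 2 * (int X * t)"
    proof -
      have "int (N choose n) * int Q - int (2*m + 1) * int ((2*m) choose m) * int ((2*k) choose k) * int Q
          = int p * int X * (int (PP p N * (PP p k)^2) - int (PP p (2*k) * (PP p n)^2))"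
        unfolding L R by (rule right_diff_distrib[symmetric])
      also have "\<dots> = int p * int X * (int p * t)" unfolding t ..
      also have "\<dots> = int p ^ 2 * (int X * t)" by (simp add: power2_eq_square ac_simps)
      finally show ?thesis .
    qed
    then show ?thesis by (simp add: cong_iff_dvd_diff)
  qed
  then have "[int (N choose n) = int (2*m + 1) * int ((2*m) choose m) * int ((2*k) choose k)] (mod (int p ^ 2))"
    using cong_mult_rcancel[OF cop] by blast
  then show ?thesis unfolding N_def n_def .
qed

end
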